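(* Let $\psi:\Omega_n\to\mathbb{R}$ be any function, and define $|\!|\!|x|\!|\!|_\psi:=\big(\sum_{i=1}^n\|x_i\|\big)\,\psi\big(\frac{\|x_1\|}{\sum_{i}\|x_i\|},\ldots,\frac{\|x_n\|}{\sum_{i}\|x_i\|}\big)$ for $x=(x_1,\ldots,x_n)\in X^n\setminus\{0_{X^n}\}$ and $|\!|\!|0_{X^n}|\!|\!|_\psi:=0$. (i) If $|\!|\!|\cdot|\!|\!|_\psi\in\mathbf{N}_{X^n}$, then $\psi\in\mathbf{\Psi}_n$. (ii) If $|\!|\!|\cdot|\!|\!|_\psi\in\mathbf{N}^{\rm sc}_{X^n}$, then $\psi\in\mathbf{\Psi}^{\rm sc}_n$ and the norm $\|\cdot\|$ is strictly convex.
   Context: Let $(X,\|\cdot\|)$ be a normed vector space, $n\ge2$. $\mathbf{N}_{X^n}$ is the family of norms $|\!|\!|\cdot|\!|\!|$ on $X^n$ satisfying (A1) $|\!|\!|(x_1,\ldots,x_n)|\!|\!|=|\!|\!|(\pm x_1,\ldots,\pm x_n)|\!|\!|$ for all $x\in X^n$ and all sign choices, and (A2) $|\!|\!|(0_X,\ldots,0_X,v,0_X,\ldots,0_X)|\!|\!|=\|v\|$ for all $v\in X$ in any $i$th position. $\mathbf{N}^{\rm sc}_{X^n}$ is its subclass of strictly convex norms. $\Omega_n:=\{t\in\mathbb{R}^n\mid t_i\ge0,\ \sum_i t_i=1\}$, $\Omega_n^\circ:=\{t\in\Omega_n\mid t_i<1\ \forall i\}$. $\mathbf{\Psi}_n$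 is the class of convex continuous $\psi:\Omega_n\to\mathbb{R}$ with (B1) $\psi(\mathbf{e}_i)=1$ for all standard unit vectors $\mathbf{e}_i$ and (B2) $\psi(t)\ge(1-t_i)\psi\big(\frac{t_1}{1-t_i},\ldots,\frac{t_{i-1}}{1-t_i},0,\frac{t_{i+1}}{1-t_i},\ldots,\frac{t_n}{1-t_i}\big)$ for all $t\in\Omega_n^\circ$, $i=1,\ldots,n$; $\mathbf{\Psi}^{\rm sc}_n$ is its subclass of strictly convex functions. *)

theory Defs
  imports "HOL-Analysis.Analysis"
begin

text \<open>X^n is modelled as the type 'a ^ 'n (index type 'n finite, n = CARD('n)).
  A candidate norm on X^n is a function N :: 'a^'n => real; we do not use the
  library's norm instance on 'a^'n since the norm here is arbitrary.\<close>

definition is_norm :: "('v::real_vector \<Rightarrow> real) \<Rightarrow> bool" where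
  "is_norm N \<longleftrightarrow>
     (\<forall>x. N x = 0 \<longleftrightarrow> x = 0) \<and>
     (\<forall>c x. N (c *\<^sub>R x) = \<bar>c\<bar> * N x) \<and>
     (\<forall>x y. N (x + y) \<le> N x + N y)"

definition strictly_convex_norm :: "('v::real_vector \<Rightarrow> real) \<Rightarrow> bool" where
  "strictly_convex_norm N \<longleftrightarrow>
     (\<forall>x y. N x = 1 \<and> N y = 1 \<and> x \<noteq> y \<longrightarrow> N ((1/2) *\<^sub>R (x + y)) < 1)"

definition absolute_normalized_norm :: "('a::real_normed_vector ^ 'n \<Rightarrow> real) \<Rightarrow> bool" where
  "absolute_normalized_norm N \<longleftrightarrow>
     is_norm N \<and>
     (\<forall>x (s::'n \<Rightarrow> real). (\<forall>i. s i = 1 \<or> s i = -1) \<longrightarrow>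
        N (\<chi> i. s i *\<^sub>R (x $ i)) = N x) \<and>
     (\<forall>i (v::'a). N (\<chi> j. if j = i then v else 0) = norm v)"

definition absolute_normalized_sc_norm :: "('a::real_normed_vector ^ 'n \<Rightarrow> real) \<Rightarrow> bool" where
  "absolute_normalized_sc_norm N \<longleftrightarrow> absolute_normalized_norm N \<and> strictly_convex_norm N"

definition Omega :: "(real ^ 'n) set" where
  "Omega = {t. (\<forall>i. 0 \<le> t $ i) \<and> (\<Sum>i\<in>UNIV. t $ i) = 1}"

definition Omega_int :: "(real ^ 'n) set" where
  "Omega_int = {t \<in> Omega. \<forall>i. t $ i < 1}"

definition unit_vec :: "'n \<Rightarrow> real ^ 'n" where
  "unit_vec i = (\<chi> j. if j = i then 1 else 0)"

definition strictly_convex_on :: "'v::real_vector set \<Rightarrow> ('v \<Rightarrow> real) \<Rightarrow> bool" where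
  "strictly_convex_on S f \<longleftrightarrow> convex S \<and>
     (\<forall>x\<in>S. \<forall>y\<in>S. \<forall>u. x \<noteq> y \<and> 0 < u \<and> u < 1 \<longrightarrow>
        f ((1 - u) *\<^sub>R x + u *\<^sub>R y) < (1 - u) * f x + u * f y)"

definition Psi :: "(real ^ 'n \<Rightarrow> real) \<Rightarrow> bool" where
  "Psi \<psi> \<longleftrightarrow>
     convex_on Omega \<psi> \<and> continuous_on Omega \<psi> \<and>
     (\<forall>i. \<psi> (unit_vec i) = 1) \<and>
     (\<forall>t\<in>Omega_int. \<forall>i.
        \<psi> t \<ge> (1 - t $ i) * \<psi> (\<chi> j. if j = i then 0 else t $ j / (1 - t $ i)))"

definition Psi_sc :: "(real ^ 'n \<Rightarrow> real) \<Rightarrow> bool" where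
  "Psi_sc \<psi> \<longleftrightarrow> Psi \<psi> \<and> strictly_convex_on Omega \<psi>"

definition psi_norm :: "(real ^ 'n \<Rightarrow> real) \<Rightarrow> 'a::real_normed_vector ^ 'n \<Rightarrow> real" where
  "psi_norm \<psi> x =
     (if x = 0 then 0
      else (\<Sum>i\<in>UNIV. norm (x $ i)) *
           \<psi> (\<chi> i. norm (x $ i) / (\<Sum>j\<in>UNIV. norm (x $ j))))"

end

theory Submission
  imports Defs
begin

definition sgl :: "'n \<Rightarrow> 'a::zero \<Rightarrow> 'a ^ 'n" where
  "sgl i v = (\<chi> j. if j = i then v else 0)"

definition emb :: "'a::real_normed_vector \<Rightarrow> real ^ 'n \<Rightarrow> 'a ^ 'n" where
  "emb u r = (\<chi> j. r $ j *\<^sub>R u)"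

lemma isn_0: "is_norm N \<Longrightarrow> N 0 = 0"
  unfolding is_norm_def by blast

lemma isn_scale: "is_norm N \<Longrightarrow> N (c *\<^sub>R x) = \<bar>c\<bar> * N x"
  unfolding is_norm_def by blast

lemma isn_tri: "is_norm N \<Longrightarrow> N (x + y) \<le> N x + N y"
  unfolding is_norm_def by blast

lemma isn_nonneg: "is_norm N \<Longrightarrow> N x \<ge> 0"
proof -
  assume a: "is_norm N"
  have "N (x + (- x)) \<le> N x + N (- x)" using isn_tri[OF a] .
  moreover have "N (- x) = N x" using isn_scale[OF a, of "-1" x] by simp
  moreover have "N (x + (- x)) = 0" using isn_0[OF a] by simp
  ultimately show ?thesis by linarith
qed

lemma isn_minus: "is_norm N \<Longrightarrow> N (x - y) = N (y - x)"
proof -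
  assume a: "is_norm N"
  have "y - x = (-1) *\<^sub>R (x - y)" by simp
  then show ?thesis using isn_scale[OF a, of "-1" "x - y"] by simp
qed

lemma isn_diff: "is_norm N \<Longrightarrow> \<bar>N x - N y\<bar> \<le> N (x - y)"
proof -
  assume a: "is_norm N"
  have "N x \<le> N (x - y) + N y" using isn_tri[OF a, of "x - y" y] by simp
  moreover have "N y \<le> N (y - x) + N x" using isn_tri[OF a, of "y - x" x] by simp
  ultimately show ?thesis using isn_minus[OF a, of x y] by linarith
qed

lemma isn_sum: assumes a: "is_norm N" and fin: "finite S"
  shows "N (\<Sum>j\<in>S. f j) \<le> (\<Sum>j\<in>S. N (f j))"
  using fin
proof (induction S rule: finite_induct)
  case empty
  then show ?case using isn_0[OF a] by simp
next
  case (insert x F)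
  then show ?case using isn_tri[OF a, of "f x" "sum f F"] by simp
qed

lemma ann_sgl: "absolute_normalized_norm N \<Longrightarrow> N (sgl i v) = norm v"
  unfolding absolute_normalized_norm_def sgl_def by blast

lemma ann_isn: "absolute_normalized_norm N \<Longrightarrow> is_norm N"
  unfolding absolute_normalized_norm_def by blast

lemma ann_le: "absolute_normalized_norm N \<Longrightarrow> N (x::'a::real_normed_vector^'n) \<le> (\<Sum>j\<in>UNIV. norm (x $ j))"
proof -
  assume a: "absolute_normalized_norm N"
  have "x = (\<Sum>j\<in>UNIV. sgl j (x $ j))"
    by (simp add: vec_eq_iff sgl_def)
  then have "N x = N (\<Sum>j\<in>UNIV. sgl j (x $ j))" by simp
  also have "\<dots> \<le> (\<Sum>j\<in>UNIV. N (sgl j (x $ j)))" by (rule isn_sum[OF ann_isn[OF a] finite])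
  also have "\<dots> = (\<Sum>j\<in>UNIV. norm (x $ j))" using ann_sgl[OF a] by simp
  finally show ?thesis .
qed

lemma psi_emb:
  fixes u :: "'a::real_normed_vector" and r :: "real ^ 'n"
  assumes u: "norm u = 1" and nn: "\<forall>j. 0 \<le> r $ j" and pos: "(\<Sum>j\<in>UNIV. r $ j) > 0"
  shows "psi_norm \<psi> (emb u r) = (\<Sum>j\<in>UNIV. r $ j) * \<psi> (\<chi> j. r $ j / (\<Sum>k\<in>UNIV. r $ k))"
proof -
  obtain j where "r $ j \<noteq> 0" using pos by (metis (mono_tags) sum.neutral less_irrefl)
  then have "emb u r \<noteq> 0" using u by (auto simp: emb_def vec_eq_iff)
  moreover have "\<And>j. norm (emb u r $ j) = r $ j" using u nn by (simp add: emb_def)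
  ultimately show ?thesis unfolding psi_norm_def by simp
qed

lemma psi_emb_Omega:
  fixes u :: "'a::real_normed_vector" and t :: "real ^ 'n"
  assumes u: "norm u = 1" and t: "t \<in> Omega"
  shows "psi_norm \<psi> (emb u t) = \<psi> t"
proof -
  have nn: "\<forall>j. 0 \<le> t $ j" and s: "(\<Sum>j\<in>UNIV. t $ j) = 1" using t by (auto simp: Omega_def)
  show ?thesis using psi_emb[OF u nn, of \<psi>] s by simp
qed

lemma convex_Omega: "convex (Omega :: (real^'n) set)"
  unfolding convex_def Omega_def
  by (auto simp: sum.distrib sum_distrib_left[symmetric])

lemma emb_comb: "emb u ((1 - a) *\<^sub>R x + a *\<^sub>R y) = (1 - a) *\<^sub>R emb u x + a *\<^sub>R emb u y"
  by (simp add: emb_def vec_eq_iff scaleR_add_left)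

lemma emb_diff: "emb u x - emb u y = emb u (x - y)"
  by (simp add: emb_def vec_eq_iff scaleR_diff_left)

lemma emb_scale: "c *\<^sub>R emb u x = emb u (c *\<^sub>R x)"
  by (simp add: emb_def vec_eq_iff)

lemma emb_inj: "u \<noteq> 0 \<Longrightarrow> emb u x = emb u y \<Longrightarrow> x = y"
  by (simp add: emb_def vec_eq_iff)

lemma sum_remove_i: "(\<Sum>j\<in>UNIV. (if j = i then 0 else (t::real^'n) $ j)) = (\<Sum>j\<in>UNIV. t $ j) - t $ i"
proof -
  have "(\<Sum>j\<in>UNIV. (if j = i then 0 else t $ j)) = (\<Sum>j\<in>UNIV. t $ j - (if j = i then t $ i else 0))"
    by (rule sum.cong) auto
  also have "\<dots> = (\<Sum>j\<in>UNIV. t $ j) - t $ i" by (simp add: sum_subtractf)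
  finally show ?thesis .
qed

lemma part1:
  fixes \<psi> :: "real ^ 'n \<Rightarrow> real" and u :: "'a::real_normed_vector"
  assumes u: "norm u = 1" and A: "absolute_normalized_norm (psi_norm \<psi> :: 'a ^ 'n \<Rightarrow> real)"
  shows "Psi \<psi>"
proof -
  let ?N = "psi_norm \<psi> :: 'a ^ 'n \<Rightarrow> real"
  have isn: "is_norm ?N" using ann_isn[OF A] .
  have ev: "\<And>t. t \<in> Omega \<Longrightarrow> \<psi> t = ?N (emb u t)" by (metis psi_emb_Omega[OF u])
  have cvx: "convex_on Omega \<psi>"
  proof (rule convex_onI)
    show "convex (Omega :: (real^'n) set)" by (rule convex_Omega)
    fix \<theta> :: real and x y :: "real^'n"
    assume th: "0 < \<theta>" "\<theta> < 1" and xy: "x \<in> Omega" "y \<in> Omega"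
    have m: "(1 - \<theta>) *\<^sub>R x + \<theta> *\<^sub>R y \<in> Omega"
      using convex_Omega xy th unfolding convex_def by auto
    have "\<psi> ((1 - \<theta>) *\<^sub>R x + \<theta> *\<^sub>R y) = ?N ((1 - \<theta>) *\<^sub>R emb u x + \<theta> *\<^sub>R emb u y)"
      using ev[OF m] emb_comb by metis
    also have "\<dots> \<le> ?N ((1 - \<theta>) *\<^sub>R emb u x) + ?N (\<theta> *\<^sub>R emb u y)" by (rule isn_tri[OF isn])
    also have "\<dots> = (1 - \<theta>) * \<psi> x + \<theta> * \<psi> y"
      using isn_scale[OF isn] ev xy th by simp
    finally show "\<psi> ((1 - \<theta>) *\<^sub>R x + \<theta> *\<^sub>R y) \<le> (1 - \<theta>) * \<psi> x + \<theta> * \<psi> y" .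
  qed
  have cont: "continuous_on Omega \<psi>"
    unfolding continuous_on_iff
  proof (intro ballI allI impI)
    fix t :: "real^'n" and e :: real
    assume t: "t \<in> Omega" and e: "0 < e"
    define d where "d = e / real CARD('n)"
    have cpos: "real CARD('n) > 0" by simp
    have d: "d > 0" using e cpos by (simp add: d_def)
    show "\<exists>d>0. \<forall>t'\<in>Omega. dist t' t < d \<longrightarrow> dist (\<psi> t') (\<psi> t) < e"
    proof (intro exI conjI ballI impI)
      show "d > 0" by (rule d)
      fix t' assume t': "t' \<in> Omega" and dd: "dist t' t < d"
      have "dist (\<psi> t') (\<psi> t) = \<bar>?N (emb u t') - ?N (emb u t)\<bar>"
        using ev t t' by (simp add: dist_real_def)
      also have "\<dots> \<le> ?N (emb u t' - emb u t)" by (rule isn_diff[OF isn])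
      also have "\<dots> = ?N (emb u (t' - t))" by (simp add: emb_diff)
      also have "\<dots> \<le> (\<Sum>j\<in>UNIV. norm (emb u (t' - t) $ j))" by (rule ann_le[OF A])
      also have "\<dots> = (\<Sum>j\<in>UNIV. \<bar>(t' - t) $ j\<bar>)" using u by (simp add: emb_def)
      also have "\<dots> \<le> (\<Sum>j\<in>(UNIV::'n set). norm (t' - t))"
        by (rule sum_mono) (rule component_le_norm_cart)
      also have "\<dots> = real CARD('n) * dist t' t" by (simp add: dist_norm)
      also have "\<dots> < real CARD('n) * d" using dd cpos by simp
      also have "\<dots> = e" using cpos by (simp add: d_def)
      finally show "dist (\<psi> t') (\<psi> t) < e" .
    qed
  qed
  have unit: "\<And>i. \<psi> (unit_vec i) = 1"
  proof -
    fix i :: 'n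
    have "unit_vec i \<in> Omega" by (simp add: unit_vec_def Omega_def)
    moreover have "emb u (unit_vec i) = sgl i u" by (simp add: unit_vec_def emb_def sgl_def vec_eq_iff)
    ultimately show "\<psi> (unit_vec i) = 1" using ev ann_sgl[OF A] u by simp
  qed
  have b2: "\<And>t i. t \<in> Omega_int \<Longrightarrow>
        \<psi> t \<ge> (1 - t $ i) * \<psi> (\<chi> j. if j = i then 0 else t $ j / (1 - t $ i))"
  proof -
    fix t :: "real^'n" and i :: 'n
    assume ti: "t \<in> Omega_int"
    then have tO: "t \<in> Omega" and lt: "t $ i < 1" by (auto simp: Omega_int_def)
    have nn: "\<forall>j. 0 \<le> t $ j" and s1: "(\<Sum>j\<in>UNIV. t $ j) = 1" using tO by (auto simp: Omega_def)
    define r where "r = (\<chi> j. if j = i then 0 else t $ j)"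
    have rs: "(\<Sum>j\<in>UNIV. r $ j) = 1 - t $ i" using sum_remove_i[of i t] s1 by (simp add: r_def)
    have rnn: "\<forall>j. 0 \<le> r $ j" using nn by (simp add: r_def)
    have "?N (emb u r) = (1 - t $ i) * \<psi> (\<chi> j. r $ j / (1 - t $ i))"
      using psi_emb[OF u rnn, of \<psi>] rs lt by simp
    also have "(\<chi> j. r $ j / (1 - t $ i)) = (\<chi> j. if j = i then 0 else t $ j / (1 - t $ i))"
      by (simp add: r_def vec_eq_iff)
    finally have er: "?N (emb u r) = (1 - t $ i) * \<psi> (\<chi> j. if j = i then 0 else t $ j / (1 - t $ i))" .
    define s :: "'n \<Rightarrow> real" where "s = (\<lambda>j. if j = i then -1 else 1)"
    have "\<forall>j. s j = 1 \<or> s j = -1" by (simp add: s_def)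
    then have a1: "?N (\<chi> j. s j *\<^sub>R (emb u t $ j)) = ?N (emb u t)"
      using A unfolding absolute_normalized_norm_def by blast
    have "emb u t + (\<chi> j. s j *\<^sub>R (emb u t $ j)) = 2 *\<^sub>R emb u r"
      by (auto simp: vec_eq_iff emb_def s_def r_def simp flip: scaleR_add_left)
    then have "2 * ?N (emb u r) \<le> ?N (emb u t) + ?N (\<chi> j. s j *\<^sub>R (emb u t $ j))"
      using isn_tri[OF isn, of "emb u t" "\<chi> j. s j *\<^sub>R (emb u t $ j)"] isn_scale[OF isn, of 2 "emb u r"]
      by simp
    then have "?N (emb u r) \<le> \<psi> t" using a1 ev[OF tO] by simp
    then show "\<psi> t \<ge> (1 - t $ i) * \<psi> (\<chi> j. if j = i then 0 else t $ j / (1 - t $ i))"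
      using er by simp
  qed
  show ?thesis unfolding Psi_def using cvx cont unit b2 by blast
qed

lemma isn_pos: "is_norm N \<Longrightarrow> x \<noteq> 0 \<Longrightarrow> N x > 0"
  using isn_nonneg[of N x] unfolding is_norm_def by force

lemma sc_tri_aux:
  assumes isn: "is_norm N" and sc: "strictly_convex_norm N" and p: "p \<noteq> 0" and q: "q \<noteq> 0"
    and le: "N p \<le> N q" and ne: "(1 / N p) *\<^sub>R p \<noteq> (1 / N q) *\<^sub>R q"
  shows "N (p + q) < N p + N q"
proof -
  define a where "a = N p"
  define b where "b = N q"
  have a: "a > 0" using isn_pos[OF isn p] by (simp add: a_def)
  have b: "b > 0" using isn_pos[OF isn q] by (simp add: b_def)
  define p' where "p' = (1 / a) *\<^sub>R p"
  define q' where "q' = (1 / b) *\<^sub>R q"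
  have np': "N p' = 1" using isn_scale[OF isn, of "1/a" p] a by (simp add: p'_def a_def)
  have nq': "N q' = 1" using isn_scale[OF isn, of "1/b" q] b by (simp add: q'_def b_def)
  have pp: "p = a *\<^sub>R p'" using a by (simp add: p'_def)
  have qq: "q = b *\<^sub>R q'" using b by (simp add: q'_def)
  have ne': "p' \<noteq> q'" using ne by (simp add: p'_def q'_def a_def b_def)
  have "N ((1/2) *\<^sub>R (p' + q')) < 1" using sc np' nq' ne' unfolding strictly_convex_norm_def by blast
  then have h: "N (p' + q') < 2" using isn_scale[OF isn, of "1/2" "p' + q'"] by simp
  have "p + q = a *\<^sub>R (p' + q') + (b - a) *\<^sub>R q'"
    by (simp add: pp qq algebra_simps)
  then have "N (p + q) \<le> N (a *\<^sub>R (p' + q')) + N ((b - a) *\<^sub>R q')"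
    using isn_tri[OF isn] by simp
  also have "\<dots> = a * N (p' + q') + (b - a)"
    using isn_scale[OF isn] a le nq' by (simp add: a_def b_def)
  also have "\<dots> < a * 2 + (b - a)" using h a by simp
  finally show ?thesis by (simp add: a_def b_def)
qed

lemma sc_tri:
  assumes isn: "is_norm N" and sc: "strictly_convex_norm N" and p: "p \<noteq> 0" and q: "q \<noteq> 0"
    and ne: "(1 / N p) *\<^sub>R p \<noteq> (1 / N q) *\<^sub>R q"
  shows "N (p + q) < N p + N q"
proof (cases "N p \<le> N q")
  case True
  show ?thesis by (rule sc_tri_aux[OF isn sc p q True ne])
next
  case False
  then have "N q \<le> N p" by simp
  from sc_tri_aux[OF isn sc q p this] ne show ?thesis by (simp add: add.commute)
qed

lemma Omega_nz: "x \<in> Omega \<Longrightarrow> x \<noteq> 0"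
  by (auto simp: Omega_def)

lemma part2:
  fixes \<psi> :: "real ^ 'n \<Rightarrow> real" and u :: "'a::real_normed_vector"
  assumes u: "norm u = 1" and A: "absolute_normalized_sc_norm (psi_norm \<psi> :: 'a ^ 'n \<Rightarrow> real)"
  shows "Psi_sc \<psi> \<and> strictly_convex_norm (norm :: 'a \<Rightarrow> real)"
proof -
  let ?N = "psi_norm \<psi> :: 'a ^ 'n \<Rightarrow> real"
  have A1: "absolute_normalized_norm ?N" and sc: "strictly_convex_norm ?N"
    using A unfolding absolute_normalized_sc_norm_def by auto
  have isn: "is_norm ?N" using ann_isn[OF A1] .
  have u0: "u \<noteq> 0" using u by auto
  have ev: "\<And>t. t \<in> Omega \<Longrightarrow> \<psi> t = ?N (emb u t)" by (metis psi_emb_Omega[OF u])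
  have emb0: "\<And>x::real^'n. x \<in> Omega \<Longrightarrow> emb u x \<noteq> 0"
  proof -
    fix x :: "real^'n" assume x: "x \<in> Omega"
    show "emb u x \<noteq> 0"
    proof
      assume e: "emb u x = 0"
      have "emb u x = emb u 0" using e by (simp add: emb_def vec_eq_iff)
      then have "x = 0" using emb_inj[OF u0] by blast
      then show False using Omega_nz[OF x] by simp
    qed
  qed
  have scon: "strictly_convex_on Omega \<psi>"
    unfolding strictly_convex_on_def
  proof (intro conjI ballI allI impI)
    show "convex (Omega :: (real^'n) set)" by (rule convex_Omega)
    fix x y :: "real^'n" and \<theta> :: real
    assume x: "x \<in> Omega" and y: "y \<in> Omega" and h: "x \<noteq> y \<and> 0 < \<theta> \<and> \<theta> < 1"
    then have xy: "x \<noteq> y" and th: "0 < \<theta>" "\<theta> < 1" by auto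
    have m: "(1 - \<theta>) *\<^sub>R x + \<theta> *\<^sub>R y \<in> Omega"
      using convex_Omega x y th unfolding convex_def by auto
    define p where "p = (1 - \<theta>) *\<^sub>R emb u x"
    define q where "q = \<theta> *\<^sub>R emb u y"
    have p0: "p \<noteq> 0" using emb0[OF x] th by (simp add: p_def)
    have q0: "q \<noteq> 0" using emb0[OF y] th by (simp add: q_def)
    have Np: "?N p = (1 - \<theta>) * \<psi> x" using isn_scale[OF isn] ev[OF x] th by (simp add: p_def)
    have Nq: "?N q = \<theta> * \<psi> y" using isn_scale[OF isn] ev[OF y] th by (simp add: q_def)
    define a where "a = \<psi> x"
    define b where "b = \<psi> y"
    have a: "a > 0" using isn_pos[OF isn emb0[OF x]] ev[OF x] by (simp add: a_def)
    have b: "b > 0" using isn_pos[OF isn emb0[OF y]] ev[OF y] by (simp add: b_def)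
    have ep: "(1 / ?N p) *\<^sub>R p = emb u ((1 / a) *\<^sub>R x)"
      unfolding Np a_def[symmetric] using th a by (simp add: p_def emb_scale[symmetric])
    have eq: "(1 / ?N q) *\<^sub>R q = emb u ((1 / b) *\<^sub>R y)"
      unfolding Nq b_def[symmetric] using th b by (simp add: q_def emb_scale[symmetric])
    have ne: "(1 / ?N p) *\<^sub>R p \<noteq> (1 / ?N q) *\<^sub>R q"
    proof
      assume "(1 / ?N p) *\<^sub>R p = (1 / ?N q) *\<^sub>R q"
      then have e: "(1 / a) *\<^sub>R x = (1 / b) *\<^sub>R y" using ep eq emb_inj[OF u0] by metis
      have sx: "(\<Sum>j\<in>UNIV. x $ j) = 1" using x by (simp add: Omega_def)
      have sy: "(\<Sum>j\<in>UNIV. y $ j) = 1" using y by (simp add: Omega_def)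
      have "(\<Sum>j\<in>UNIV. ((1 / a) *\<^sub>R x) $ j) = (\<Sum>j\<in>UNIV. ((1 / b) *\<^sub>R y) $ j)" using e by simp
      then have "1 / a = 1 / b" using sx sy by (simp add: sum_divide_distrib[symmetric])
      then have "(1 / a) *\<^sub>R x = (1 / a) *\<^sub>R y" using e by simp
      then have "x = y" using a by simp
      then show False using xy by simp
    qed
    have "\<psi> ((1 - \<theta>) *\<^sub>R x + \<theta> *\<^sub>R y) = ?N (p + q)"
      using ev[OF m] emb_comb p_def q_def by metis
    also have "\<dots> < ?N p + ?N q" by (rule sc_tri[OF isn sc p0 q0 ne])
    finally show "\<psi> ((1 - \<theta>) *\<^sub>R x + \<theta> *\<^sub>R y) < (1 - \<theta>) * \<psi> x + \<theta> * \<psi> y"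
      using Np Nq by simp
  qed
  have scn: "strictly_convex_norm (norm :: 'a \<Rightarrow> real)"
    unfolding strictly_convex_norm_def
  proof (intro allI impI)
    fix x y :: 'a
    assume h: "norm x = 1 \<and> norm y = 1 \<and> x \<noteq> y"
    define i :: 'n where "i = undefined"
    have "?N (sgl i x) = 1" "?N (sgl i y) = 1" using ann_sgl[OF A1] h by auto
    moreover have "sgl i x \<noteq> sgl i y" using h by (auto simp: sgl_def vec_eq_iff)
    ultimately have "?N ((1/2) *\<^sub>R (sgl i x + sgl i y)) < 1"
      using sc unfolding strictly_convex_norm_def by blast
    moreover have "(1/2) *\<^sub>R (sgl i x + sgl i y) = sgl i ((1/2) *\<^sub>R (x + y))"
      by (simp add: sgl_def vec_eq_iff)
    ultimately show "norm ((1/2) *\<^sub>R (x + y)) < 1" using ann_sgl[OF A1] by metis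
  qed
  show ?thesis unfolding Psi_sc_def using part1[OF u A1] scon scn by blast
qed

theorem theorem2p12:
  fixes \<psi> :: "real ^ 'n \<Rightarrow> real"
  assumes n2: "CARD('n) \<ge> 2"
    and nontriv: "\<exists>v::'a::real_normed_vector. v \<noteq> 0"
  shows "(absolute_normalized_norm (psi_norm \<psi> :: 'a ^ 'n \<Rightarrow> real) \<longrightarrow> Psi \<psi>) \<and>
         (absolute_normalized_sc_norm (psi_norm \<psi> :: 'a ^ 'n \<Rightarrow> real) \<longrightarrow>
            Psi_sc \<psi> \<and> strictly_convex_norm (norm :: 'a \<Rightarrow> real))"
proof -
  obtain v :: 'a where v: "v \<noteq> 0" using nontriv by blast
  define u where "u = (1 / norm v) *\<^sub>R v"
  have u: "norm u = 1" using v by (simp add: u_def)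
  show ?thesis using part1[OF u] part2[OF u] by blast
qed

end
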